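(* Let $D$ be the derivation of the polynomial ring $\mathbb{Q}[\alpha,\beta][a,b,u_1,u_2,u_3,u_4]$ that is $\mathbb{Q}[\alpha,\beta]$-linear (so $D(\alpha)=D(\beta)=0$), satisfies the Leibniz rule $D(fg)=D(f)g+fD(g)$, and is given on generators by $$D(a)=\alpha a u_4,\quad D(b)=\beta b u_3,\quad D(u_4)=u_1u_2,\quad D(u_3)=u_1u_2,\quad D(u_1)=u_1u_3,\quad D(u_2)=u_2u_4.$$ Then for every $n\geq0$, $D^n(ab)=ab\,P_n(u_1,u_2,u_3,u_4\mid\alpha,\beta)$.
   Context: For $\sigma=\sigma_1\cdots\sigma_m\in\mathfrak S_m$: ${\rm LRmax}(\sigma)$ is the number of $i$ with $\sigma_j<\sigma_i$ for all $j<i$; ${\rm RLmax}(\sigma)$ is the number of $i$ with $\sigma_j<\sigma_i$ for all $j>i$. With the convention $\sigma_0=\sigma_{m+1}=0$: ${\rm W}(\sigma)$ is the number of $i\in[m]$ with $\sigma_{i-1}<\sigma_i>\sigma_{i+1}$; ${\rm V}(\sigma)$ is the number of $i$ with $1<i<m$ and $\sigma_{i-1}>\sigma_i<\sigma_{i+1}$; ${\rm rdd}(\sigma)$ is the number of $i$ with $1<i\le m$ and $\sigma_{i-1}>\sigma_i>\sigma_{i+1}$; ${\rm lda}(\sigma)$ is the number of $i$ with $1\le i<m$ and $\sigma_{i-1}<\sigma_i<\sigma_{i+1}$. Define $$P_n(u_1,u_2,u_3,u_4\mid\alpha,\beta)=\sum_{\sigma\in\mathfrak S_{n+1}}u_1^{{\rm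 V}(\sigma)}u_2^{{\rm W}(\sigma)-1}u_3^{{\rm rdd}(\sigma)}u_4^{{\rm lda}(\sigma)}\alpha^{{\rm LRmax}(\sigma)-1}\beta^{{\rm RLmax}(\sigma)-1}.$$ *)

theory Defs
  imports "HOL-Library.Poly_Mapping" "HOL-Combinatorics.Multiset_Permutations"
begin

datatype var = Alpha | Beta | A | B | U1 | U2 | U3 | U4

text \<open>Polynomials over Q in these variables: finitely supported maps from monomials
  (exponent vectors) to coefficients; this is a commutative ring with the usual product.\<close>
type_synonym poly = "(var \<Rightarrow>\<^sub>0 nat) \<Rightarrow>\<^sub>0 rat"

definition Var :: "var \<Rightarrow> poly" where
  "Var x = Poly_Mapping.single (Poly_Mapping.single x 1) 1"

definition Const :: "rat \<Rightarrow> poly" where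
  "Const c = Poly_Mapping.single 0 c"

text \<open>Permutations in S_m are lists (sigma_1,...,sigma_m); value at position i with the
  convention sigma_0 = sigma_(m+1) = 0.\<close>
definition sv :: "nat list \<Rightarrow> nat \<Rightarrow> nat" where
  "sv s i = (if 1 \<le> i \<and> i \<le> length s then s ! (i - 1) else 0)"

definition LRmax :: "nat list \<Rightarrow> nat" where
  "LRmax s = card {i \<in> {1..length s}. \<forall>j. 1 \<le> j \<and> j < i \<longrightarrow> sv s j < sv s i}"

definition RLmax :: "nat list \<Rightarrow> nat" where
  "RLmax s = card {i \<in> {1..length s}. \<forall>j. i < j \<and> j \<le> length s \<longrightarrow> sv s j < sv s i}"

definition Wst :: "nat list \<Rightarrow> nat" where
  "Wst s = card {i \<in> {1..length s}. sv s (i - 1) < sv s i \<and> sv s i > sv s (i + 1)}"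

definition Vst :: "nat list \<Rightarrow> nat" where
  "Vst s = card {i. 1 < i \<and> i < length s \<and> sv s (i - 1) > sv s i \<and> sv s i < sv s (i + 1)}"

definition rdd :: "nat list \<Rightarrow> nat" where
  "rdd s = card {i. 1 < i \<and> i \<le> length s \<and> sv s (i - 1) > sv s i \<and> sv s i > sv s (i + 1)}"

definition lda :: "nat list \<Rightarrow> nat" where
  "lda s = card {i. 1 \<le> i \<and> i < length s \<and> sv s (i - 1) < sv s i \<and> sv s i < sv s (i + 1)}"

definition Pn :: "nat \<Rightarrow> poly" where
  "Pn n = (\<Sum>s\<in>permutations_of_set {1..n+1}.
      Var U1 ^ Vst s * Var U2 ^ (Wst s - 1) * Var U3 ^ rdd s * Var U4 ^ lda s
      * Var Alpha ^ (LRmax s - 1) * Var Beta ^ (RLmax s - 1))"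

end

theory Submission imports Defs begin

fun cnt :: "(nat \<Rightarrow> nat \<Rightarrow> nat \<Rightarrow> bool) \<Rightarrow> nat list \<Rightarrow> nat" where
  "cnt P (a#b#c#r) = (if P a b c then 1 else 0) + cnt P (b#c#r)"
| "cnt P _ = 0"


lemma cnt_card: "card {i. 1 \<le> i \<and> i+1 < length t \<and> P (t!(i-1)) (t!i) (t!(i+1))} = cnt P t"
proof (induction P t rule: cnt.induct)
  case (1 P a b c r)
  let ?l = "b#c#r"
  let ?S = "{i. 1 \<le> i \<and> i+1 < length ?l \<and> P (?l!(i-1)) (?l!i) (?l!(i+1))}"
  have e: "{i. 1 \<le> i \<and> i+1 < length (a#?l) \<and> P ((a#?l)!(i-1)) ((a#?l)!i) ((a#?l)!(i+1))}
     = {i. i = 1 \<and> P a b c} \<union> Suc ` ?S"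
  proof (intro set_eqI iffI)
    fix i assume "i \<in> {i. 1 \<le> i \<and> i+1 < length (a#?l) \<and> P ((a#?l)!(i-1)) ((a#?l)!i) ((a#?l)!(i+1))}"
    then show "i \<in> {i. i = 1 \<and> P a b c} \<union> Suc ` ?S"
      by (cases i; cases "i - 1"; auto simp: image_iff nth_Cons split: nat.splits)
  next
    fix i assume "i \<in> {i. i = 1 \<and> P a b c} \<union> Suc ` ?S"
    then show "i \<in> {i. 1 \<le> i \<and> i+1 < length (a#?l) \<and> P ((a#?l)!(i-1)) ((a#?l)!i) ((a#?l)!(i+1))}"
      by (auto simp: nth_Cons split: nat.splits)
  qed
  have fin: "finite ?S" by (rule finite_subset[of _ "{..<length ?l}"]) auto
  have f1: "finite {i::nat. i = 1 \<and> P a b c}" by (rule finite_subset[of _ "{1}"]) auto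
  have d: "{i. i = 1 \<and> P a b c} \<inter> Suc ` ?S = {}" by auto
  have "card ({i. i = 1 \<and> P a b c} \<union> Suc ` ?S) = card {i::nat. i = 1 \<and> P a b c} + card (Suc ` ?S)"
    using card_Un_disjoint[OF f1 finite_imageI[OF fin] d] .
  also have "card (Suc ` ?S) = card ?S" by (simp add: card_image)
  also have "card {i::nat. i = 1 \<and> P a b c} = (if P a b c then 1 else 0)" by auto
  finally show ?case using 1 e by simp
next
  case ("2_1" P) then show ?case by simp
next
  case ("2_2" P v) then show ?case by auto
next
  case ("2_3" P v va) then show ?case by auto
qed

lemma cnt_Cons2: "length l \<ge> 2 \<Longrightarrow> cnt P (a # l) = (if P a (l!0) (l!1) then 1 else 0) + cnt P l"
proof -
  assume "length l \<ge> 2"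
  then obtain b c r where "l = b#c#r" by (cases l; cases "tl l") auto
  then show ?thesis by simp
qed

lemma cnt_append: "cnt P (xs @ [a,b] @ ys) = cnt P (xs @ [a,b]) + cnt P (a#b#ys)"
proof (induction xs)
  case Nil then show ?case by simp
next
  case (Cons z zs)
  have l1: "length (zs @ [a,b] @ ys) \<ge> 2" "length (zs @ [a,b]) \<ge> 2" by auto
  have i0: "(zs @ [a,b] @ ys)!0 = (zs @ [a,b])!0" by (cases zs) auto
  have i1: "(zs @ [a,b] @ ys)!1 = (zs @ [a,b])!1" by (cases zs; cases "tl zs") auto
  show ?case using Cons.IH cnt_Cons2[OF l1(1), of P z] cnt_Cons2[OF l1(2), of P z] i0 i1
    by simp
qed

lemma drop4: "k + 4 \<le> length T \<Longrightarrow> drop k T = T!k # T!(k+1) # T!(k+2) # T!(k+3) # drop (k+4) T"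
proof -
  assume a: "k + 4 \<le> length T"
  have "\<And>j. j < length T \<Longrightarrow> drop j T = T!j # drop (Suc j) T" by (simp add: Cons_nth_drop_Suc)
  from this[of k] this[of "k+1"] this[of "k+2"] this[of "k+3"] a show ?thesis
    by (simp add: numeral_3_eq_3 numeral_Bit0)
qed

lemma cnt_ins:
  assumes "k + 4 \<le> length T"
  shows "cnt P (take (k+2) T @ x # drop (k+2) T) + (if P (T!k) (T!(k+1)) (T!(k+2)) then 1 else 0)
      + (if P (T!(k+1)) (T!(k+2)) (T!(k+3)) then 1 else 0)
    = cnt P T + (if P (T!k) (T!(k+1)) x then 1 else 0) + (if P (T!(k+1)) x (T!(k+2)) then 1 else 0)
      + (if P x (T!(k+2)) (T!(k+3)) then 1 else 0)"
proof -
  define L where "L = take k T"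
  define R where "R = drop (k+4) T"
  have T: "T = L @ [T!k, T!(k+1)] @ (T!(k+2) # T!(k+3) # R)"
    using drop4[OF assms] append_take_drop_id[of k T] unfolding L_def R_def by simp
  have T': "take (k+2) T @ x # drop (k+2) T = L @ [T!k, T!(k+1)] @ (x # T!(k+2) # T!(k+3) # R)"
  proof -
    have "take (k+2) T = L @ [T!k, T!(k+1)]"
      using assms unfolding L_def by (simp add: take_Suc_conv_app_nth)
      moreover have "drop (k+2) T = T!(k+2) # T!(k+3) # R"
    proof -
      have "drop (k+2) T = drop 2 (drop k T)" by (simp add: add.commute)
      then show ?thesis using drop4[OF assms] unfolding R_def by (simp add: numeral_2_eq_2)
    qed
    ultimately show ?thesis by simp
  qed
  have c1: "cnt P T = cnt P (L @ [T!k, T!(k+1)]) + cnt P (T!k # T!(k+1) # T!(k+2) # T!(k+3) # R)"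
    by (subst T) (rule cnt_append)
  have c2: "cnt P (take (k+2) T @ x # drop (k+2) T) = cnt P (L @ [T!k, T!(k+1)]) + cnt P (T!k # T!(k+1) # x # T!(k+2) # T!(k+3) # R)"
    by (subst T') (rule cnt_append)
  show ?thesis unfolding c1 c2 by simp
qed

definition peak :: "nat \<Rightarrow> nat \<Rightarrow> nat \<Rightarrow> bool" where "peak a b c = (a < b \<and> c < b)"
definition valley :: "nat \<Rightarrow> nat \<Rightarrow> nat \<Rightarrow> bool" where "valley a b c = (b < a \<and> b < c)"
definition ddes :: "nat \<Rightarrow> nat \<Rightarrow> nat \<Rightarrow> bool" where "ddes a b c = (b < a \<and> c < b)"
definition dasc :: "nat \<Rightarrow> nat \<Rightarrow> nat \<Rightarrow> bool" where "dasc a b c = (a < b \<and> b < c)"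

definition padT :: "nat list \<Rightarrow> nat list" where "padT s = 0#0#s@[0,0]"

lemma cnt_card': "card {j. j+2 < length t \<and> P (t!j) (t!(j+1)) (t!(j+2))} = cnt P t"
proof -
  have "{i. 1 \<le> i \<and> i+1 < length t \<and> P (t!(i-1)) (t!i) (t!(i+1))} = Suc ` {j. j+2 < length t \<and> P (t!j) (t!(j+1)) (t!(j+2))}"
  proof (rule set_eqI)
    fix i show "i \<in> {i. 1 \<le> i \<and> i+1 < length t \<and> P (t!(i-1)) (t!i) (t!(i+1))} \<longleftrightarrow> i \<in> Suc ` {j. j+2 < length t \<and> P (t!j) (t!(j+1)) (t!(j+2))}"
      by (cases i) (auto simp: image_iff)
  qed
  then show ?thesis using cnt_card[of t P] by (simp add: card_image)
qed

lemma padT_nth: "j \<le> length s + 2 \<Longrightarrow> padT s ! (j+1) = sv s j"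
proof (cases j)
  case 0 then show ?thesis by (simp add: padT_def sv_def)
next
  case (Suc i)
  assume j: "j \<le> length s + 2"
  show ?thesis
  proof (cases "i < length s")
    case True then show ?thesis using Suc by (simp add: padT_def sv_def nth_append)
  next
    case False
    then have "i - length s = 0 \<or> i - length s = 1" using j Suc by auto
    then show ?thesis using Suc False by (auto simp: padT_def sv_def nth_append)
  qed
qed

lemma padT_nth': "j \<le> length s + 3 \<Longrightarrow> padT s ! j = sv s (j - 1)"
proof (cases j)
  case 0 then show ?thesis by (simp add: padT_def sv_def)
next
  case (Suc i) assume "j \<le> length s + 3" then show ?thesis using Suc padT_nth[of i s] by simp
qed

lemma padT_len: "length (padT s) = length s + 4" by (simp add: padT_def)

lemma sv0: "sv s 0 = 0" and svm: "j > length s \<Longrightarrow> sv s j = 0" by (auto simp: sv_def)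

lemma stat_cnt:
  assumes "\<And>c. \<not> P 0 0 c" "\<And>a. \<not> P a 0 0"
  shows "card {j. 1 \<le> j \<and> j \<le> length s \<and> P (sv s (j-1)) (sv s j) (sv s (j+1))} = cnt P (padT s)"
proof -
  have "{j. j+2 < length (padT s) \<and> P (padT s!j) (padT s!(j+1)) (padT s!(j+2))}
      = {j. 1 \<le> j \<and> j \<le> length s \<and> P (sv s (j-1)) (sv s j) (sv s (j+1))}"
  proof (intro set_eqI iffI)
    fix j assume "j \<in> {j. j+2 < length (padT s) \<and> P (padT s!j) (padT s!(j+1)) (padT s!(j+2))}"
    then have j: "j \<le> length s + 1" and p: "P (padT s!j) (padT s!(j+1)) (padT s!(j+2))" by (auto simp: padT_len)
    have e: "padT s!j = sv s (j-1)" "padT s!(j+1) = sv s j" "padT s!(j+2) = sv s (j+1)"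
      using j padT_nth'[of j s] padT_nth[of j s] padT_nth[of "j+1" s] by auto
    have "j \<noteq> 0" using p assms(1) by (cases j) (auto simp: padT_def)
    moreover have "j \<noteq> length s + 1" using p assms(2) e by (auto simp: svm)
    ultimately show "j \<in> {j. 1 \<le> j \<and> j \<le> length s \<and> P (sv s (j-1)) (sv s j) (sv s (j+1))}"
      using j p e by auto
  next
    fix j assume "j \<in> {j. 1 \<le> j \<and> j \<le> length s \<and> P (sv s (j-1)) (sv s j) (sv s (j+1))}"
    then have j: "1 \<le> j" "j \<le> length s" and p: "P (sv s (j-1)) (sv s j) (sv s (j+1))" by auto
    have e: "padT s!j = sv s (j-1)" "padT s!(j+1) = sv s j" "padT s!(j+2) = sv s (j+1)"
      using j padT_nth'[of j s] padT_nth[of j s] padT_nth[of "j+1" s] by auto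
    show "j \<in> {j. j+2 < length (padT s) \<and> P (padT s!j) (padT s!(j+1)) (padT s!(j+2))}"
      using j p e by (auto simp: padT_len)
  qed
  then show ?thesis using cnt_card'[of "padT s" P] by simp
qed

lemma Wst_cnt: "Wst s = cnt peak (padT s)"
proof -
  have "Wst s = card {j. 1 \<le> j \<and> j \<le> length s \<and> peak (sv s (j-1)) (sv s j) (sv s (j+1))}"
    unfolding Wst_def peak_def by (rule arg_cong[where f=card]) auto
  also have "\<dots> = cnt peak (padT s)" by (rule stat_cnt) (auto simp: peak_def)
  finally show ?thesis .
qed

lemma Vst_cnt: "Vst s = cnt valley (padT s)"
proof -
  have "Vst s = card {j. 1 \<le> j \<and> j \<le> length s \<and> valley (sv s (j-1)) (sv s j) (sv s (j+1))}"
    unfolding Vst_def valley_def apply (rule arg_cong[where f=card])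
    apply (auto simp: sv0)
     apply (metis One_nat_def diff_Suc_1 le_neq_implies_less not_less_zero sv0)
    by (metis Suc_eq_plus1 le_neq_implies_less lessI not_less_zero svm)
  also have "\<dots> = cnt valley (padT s)" by (rule stat_cnt) (auto simp: valley_def)
  finally show ?thesis .
qed

lemma rdd_cnt: "rdd s = cnt ddes (padT s)"
proof -
  have "rdd s = card {j. 1 \<le> j \<and> j \<le> length s \<and> ddes (sv s (j-1)) (sv s j) (sv s (j+1))}"
    unfolding rdd_def ddes_def apply (rule arg_cong[where f=card])
    apply (auto simp: sv0)
    by (metis One_nat_def diff_Suc_1 le_neq_implies_less not_less_zero sv0)
  also have "\<dots> = cnt ddes (padT s)" by (rule stat_cnt) (auto simp: ddes_def)
  finally show ?thesis .
qed

lemma lda_cnt: "lda s = cnt dasc (padT s)"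
proof -
  have "lda s = card {j. 1 \<le> j \<and> j \<le> length s \<and> dasc (sv s (j-1)) (sv s j) (sv s (j+1))}"
    unfolding lda_def dasc_def apply (rule arg_cong[where f=card])
    apply (auto simp: sv0)
    by (metis Suc_eq_plus1 le_neq_implies_less lessI not_less_zero svm)
  also have "\<dots> = cnt dasc (padT s)" by (rule stat_cnt) (auto simp: dasc_def)
  finally show ?thesis .
qed

definition ins :: "nat \<Rightarrow> nat \<Rightarrow> nat list \<Rightarrow> nat list" where
  "ins k x s = take k s @ x # drop k s"

lemma padT_ins: "k \<le> length s \<Longrightarrow> padT (ins k x s) = take (k+2) (padT s) @ x # drop (k+2) (padT s)"
  by (simp add: padT_def ins_def)

lemma cnt_ins_sv:
  assumes "k \<le> length s"
  shows "cnt P (padT (ins k x s)) + (if P (sv s (k-1)) (sv s k) (sv s (k+1)) then 1 else 0)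
      + (if P (sv s k) (sv s (k+1)) (sv s (k+2)) then 1 else 0)
    = cnt P (padT s) + (if P (sv s (k-1)) (sv s k) x then 1 else 0) + (if P (sv s k) x (sv s (k+1)) then 1 else 0)
      + (if P x (sv s (k+1)) (sv s (k+2)) then 1 else 0)"
proof -
  have l: "k + 4 \<le> length (padT s)" using assms by (simp add: padT_len)
  have e: "padT s ! k = sv s (k-1)" "padT s ! (k+1) = sv s k" "padT s ! (k+2) = sv s (k+1)" "padT s ! (k+3) = sv s (k+2)"
    using assms padT_nth'[of k s] padT_nth[of k s] padT_nth[of "k+1" s] padT_nth[of "k+2" s]
    by (auto simp: numeral_3_eq_3)
  show ?thesis using cnt_ins[OF l, of P x] e padT_ins[OF assms, of x] by simp
qed

fun lrm :: "nat \<Rightarrow> nat list \<Rightarrow> nat" where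
  "lrm b [] = 0"
| "lrm b (y#ys) = (if b < y then Suc (lrm y ys) else lrm b ys)"

fun rlm :: "nat list \<Rightarrow> nat" where
  "rlm [] = 0"
| "rlm (y#ys) = (if \<forall>z\<in>set ys. z < y then 1 else 0) + rlm ys"

lemma lrm_card: "lrm b s = card {i. i < length s \<and> b < s!i \<and> (\<forall>j<i. s!j < s!i)}"
proof (induction s arbitrary: b)
  case Nil then show ?case by simp
next
  case (Cons y ys)
  let ?S = "\<lambda>b. {i. i < length ys \<and> b < ys!i \<and> (\<forall>j<i. ys!j < ys!i)}"
  have fin: "finite (?S c)" for c by (rule finite_subset[of _ "{..<length ys}"]) auto
  have f1: "finite {i::nat. i = 0 \<and> b < y}" by (rule finite_subset[of _ "{0}"]) auto
  have e: "{i. i < length (y#ys) \<and> b < (y#ys)!i \<and> (\<forall>j<i. (y#ys)!j < (y#ys)!i)}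
      = {i. i = 0 \<and> b < y} \<union> Suc ` (?S (max b y))"
  proof (rule set_eqI)
    fix i show "i \<in> {i. i < length (y#ys) \<and> b < (y#ys)!i \<and> (\<forall>j<i. (y#ys)!j < (y#ys)!i)} \<longleftrightarrow>
       i \<in> {i. i = 0 \<and> b < y} \<union> Suc ` (?S (max b y))"
    proof (cases i)
      case 0 then show ?thesis by auto
    next
      case (Suc k)
      have "(\<forall>j<Suc k. (y#ys)!j < ys!k) \<longleftrightarrow> y < ys!k \<and> (\<forall>j<k. ys!j < ys!k)"
        by (auto simp: less_Suc_eq_0_disj)
      then show ?thesis using Suc by (auto simp: image_iff)
    qed
  qed
  have d: "{i::nat. i = 0 \<and> b < y} \<inter> Suc ` (?S (max b y)) = {}" by auto
  have "card ({i::nat. i = 0 \<and> b < y} \<union> Suc ` (?S (max b y))) = card {i::nat. i = 0 \<and> b < y} + card (Suc ` (?S (max b y)))"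
    using card_Un_disjoint[OF f1 finite_imageI[OF fin] d] .
  also have "card (Suc ` (?S (max b y))) = card (?S (max b y))" by (simp add: card_image)
  also have "card {i::nat. i = 0 \<and> b < y} = (if b < y then 1 else 0)" by auto
  finally have c: "card {i. i < length (y#ys) \<and> b < (y#ys)!i \<and> (\<forall>j<i. (y#ys)!j < (y#ys)!i)} = (if b < y then 1 else 0) + card (?S (max b y))"
    using e by simp
  show ?case unfolding c using Cons.IH[of "max b y"] by (auto simp: max_def)
qed

lemma rlm_card: "rlm s = card {i. i < length s \<and> (\<forall>j. i < j \<and> j < length s \<longrightarrow> s!j < s!i)}"
proof (induction s)
  case Nil then show ?case by simp
next
  case (Cons y ys)
  let ?S = "{i. i < length ys \<and> (\<forall>j. i < j \<and> j < length ys \<longrightarrow> ys!j < ys!i)}"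
  have fin: "finite ?S" by (rule finite_subset[of _ "{..<length ys}"]) auto
  have f1: "finite {i::nat. i = 0 \<and> (\<forall>z\<in>set ys. z < y)}" by (rule finite_subset[of _ "{0}"]) auto
  have e: "{i. i < length (y#ys) \<and> (\<forall>j. i < j \<and> j < length (y#ys) \<longrightarrow> (y#ys)!j < (y#ys)!i)}
      = {i. i = 0 \<and> (\<forall>z\<in>set ys. z < y)} \<union> Suc ` ?S"
  proof (rule set_eqI)
    fix i show "i \<in> {i. i < length (y#ys) \<and> (\<forall>j. i < j \<and> j < length (y#ys) \<longrightarrow> (y#ys)!j < (y#ys)!i)} \<longleftrightarrow>
       i \<in> {i. i = 0 \<and> (\<forall>z\<in>set ys. z < y)} \<union> Suc ` ?S"
    proof (cases i)
      case 0
      have "(\<forall>j. 0 < j \<and> j < length (y#ys) \<longrightarrow> (y#ys)!j < y) \<longleftrightarrow> (\<forall>z\<in>set ys. z < y)"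
      proof
        assume a: "\<forall>j. 0 < j \<and> j < length (y#ys) \<longrightarrow> (y#ys)!j < y"
        show "\<forall>z\<in>set ys. z < y"
        proof
          fix z assume "z \<in> set ys"
          then obtain j where "j < length ys" "ys!j = z" by (auto simp: in_set_conv_nth)
          then show "z < y" using a[rule_format, of "Suc j"] by auto
        qed
      next
        assume a: "\<forall>z\<in>set ys. z < y"
        show "\<forall>j. 0 < j \<and> j < length (y#ys) \<longrightarrow> (y#ys)!j < y"
          using a by (auto simp: nth_Cons split: nat.splits)
      qed
      then show ?thesis using 0 by auto
    next
      case (Suc k)
      have "(\<forall>j. Suc k < j \<and> j < length (y#ys) \<longrightarrow> (y#ys)!j < ys!k) \<longleftrightarrow> (\<forall>j. k < j \<and> j < length ys \<longrightarrow> ys!j < ys!k)"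
        by (auto simp: nth_Cons split: nat.splits)
      then show ?thesis using Suc by (auto simp: image_iff)
    qed
  qed
  have d: "{i::nat. i = 0 \<and> (\<forall>z\<in>set ys. z < y)} \<inter> Suc ` ?S = {}" by auto
  have "card ({i::nat. i = 0 \<and> (\<forall>z\<in>set ys. z < y)} \<union> Suc ` ?S) = card {i::nat. i = 0 \<and> (\<forall>z\<in>set ys. z < y)} + card (Suc ` ?S)"
    using card_Un_disjoint[OF f1 finite_imageI[OF fin] d] .
  also have "card (Suc ` ?S) = card ?S" by (simp add: card_image)
  also have "card {i::nat. i = 0 \<and> (\<forall>z\<in>set ys. z < y)} = (if (\<forall>z\<in>set ys. z < y) then 1 else 0)" by auto
  finally show ?case using e Cons.IH by simp
qed

lemma LRmax_lrm:
  assumes pos: "\<forall>z\<in>set s. 0 < z"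
  shows "LRmax s = lrm 0 s"
proof -
  have "{i \<in> {1..length s}. \<forall>j. 1 \<le> j \<and> j < i \<longrightarrow> sv s j < sv s i}
      = Suc ` {i. i < length s \<and> 0 < s!i \<and> (\<forall>j<i. s!j < s!i)}"
  proof (rule set_eqI)
    fix i show "i \<in> {i \<in> {1..length s}. \<forall>j. 1 \<le> j \<and> j < i \<longrightarrow> sv s j < sv s i} \<longleftrightarrow>
      i \<in> Suc ` {i. i < length s \<and> 0 < s!i \<and> (\<forall>j<i. s!j < s!i)}"
    proof (cases i)
      case 0 then show ?thesis by auto
    next
      case (Suc k)
      have "k < length s \<Longrightarrow> (\<forall>j. 1 \<le> j \<and> j < Suc k \<longrightarrow> sv s j < sv s (Suc k)) \<longleftrightarrow> (\<forall>j<k. s!j < s!k)"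
      proof
        assume "k < length s" "\<forall>j. 1 \<le> j \<and> j < Suc k \<longrightarrow> sv s j < sv s (Suc k)"
        then show "\<forall>j<k. s!j < s!k" by (auto simp: sv_def)
      next
        assume "k < length s" "\<forall>j<k. s!j < s!k"
        then show "\<forall>j. 1 \<le> j \<and> j < Suc k \<longrightarrow> sv s j < sv s (Suc k)" by (auto simp: sv_def)
      qed
      moreover have "k < length s \<Longrightarrow> 0 < s!k" using pos by auto
      ultimately show ?thesis using Suc by (auto simp: image_iff sv_def)
    qed
  qed
  then show ?thesis unfolding LRmax_def lrm_card by (simp add: card_image)
qed

lemma RLmax_rlm: "RLmax s = rlm s"
proof -
  have "{i \<in> {1..length s}. \<forall>j. i < j \<and> j \<le> length s \<longrightarrow> sv s j < sv s i}
      = Suc ` {i. i < length s \<and> (\<forall>j. i < j \<and> j < length s \<longrightarrow> s!j < s!i)}"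
  proof (rule set_eqI)
    fix i show "i \<in> {i \<in> {1..length s}. \<forall>j. i < j \<and> j \<le> length s \<longrightarrow> sv s j < sv s i} \<longleftrightarrow>
      i \<in> Suc ` {i. i < length s \<and> (\<forall>j. i < j \<and> j < length s \<longrightarrow> s!j < s!i)}"
    proof (cases i)
      case 0 then show ?thesis by auto
    next
      case (Suc k)
      have "k < length s \<Longrightarrow> (\<forall>j. Suc k < j \<and> j \<le> length s \<longrightarrow> sv s j < sv s (Suc k)) \<longleftrightarrow> (\<forall>j. k < j \<and> j < length s \<longrightarrow> s!j < s!k)"
      proof
        assume "k < length s" "\<forall>j. Suc k < j \<and> j \<le> length s \<longrightarrow> sv s j < sv s (Suc k)"
        then show "\<forall>j. k < j \<and> j < length s \<longrightarrow> s!j < s!k" 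
          by (auto simp: sv_def)
      next
        assume "k < length s" "\<forall>j. k < j \<and> j < length s \<longrightarrow> s!j < s!k"
        then show "\<forall>j. Suc k < j \<and> j \<le> length s \<longrightarrow> sv s j < sv s (Suc k)"
          apply (auto simp: sv_def)
          subgoal for j by (drule spec[of _ "j - 1"]) auto
          done
      qed
      then show ?thesis using Suc by (auto simp: image_iff sv_def)
    qed
  qed
  then show ?thesis unfolding RLmax_def rlm_card by (simp add: card_image)
qed

lemma lrm_bound: "\<forall>z\<in>set s. b < z \<Longrightarrow> \<forall>z\<in>set s. b' < z \<Longrightarrow> lrm b s = lrm b' s"
  by (cases s) auto

lemma lrm_ins_mid: "x \<le> b \<or> (\<exists>z\<in>set xs. x \<le> z) \<Longrightarrow> lrm b (xs @ x # ys) = lrm b (xs @ ys)"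
proof (induction xs arbitrary: b)
  case Nil then show ?case by simp
next
  case (Cons y xs)
  show ?case
  proof (cases "b < y")
    case True
    then have "x \<le> y \<or> (\<exists>z\<in>set xs. x \<le> z)" using Cons.prems by auto
    then show ?thesis using True Cons.IH[of y] by simp
  next
    case False
    then have "x \<le> b \<or> (\<exists>z\<in>set xs. x \<le> z)" using Cons.prems by auto
    then show ?thesis using False Cons.IH[of b] by simp
  qed
qed

lemma rlm_ins: "\<forall>z\<in>set (xs @ ys). x < z \<Longrightarrow> rlm (xs @ x # ys) = rlm (xs @ ys) + (if ys = [] then 1 else 0)"
proof (induction xs)
  case Nil
  have "(\<forall>z\<in>set ys. z < x) \<longleftrightarrow> ys = []" using Nil by (cases ys) auto
  then show ?case by simp
next
  case (Cons y xs)
  have "(\<forall>z\<in>set (xs @ x # ys). z < y) \<longleftrightarrow> (\<forall>z\<in>set (xs @ ys). z < y)" using Cons.prems by auto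
  then show ?case using Cons by simp
qed

lemma LR_ins:
  assumes pos: "\<forall>z\<in>set s. x < z" "0 < x" and k: "k \<le> length s"
  shows "LRmax (ins k x s) = LRmax s + (if k = 0 then 1 else 0)"
proof -
  have p1: "\<forall>z\<in>set s. 0 < z" using pos by auto
  have p2: "\<forall>z\<in>set (ins k x s). 0 < z" using pos by (auto simp: ins_def dest!: in_set_takeD in_set_dropD)
  show ?thesis
  proof (cases k)
    case 0
    then have "lrm 0 (ins k x s) = Suc (lrm x s)" using pos by (simp add: ins_def)
    also have "lrm x s = lrm 0 s" using lrm_bound pos p1 by blast
    finally show ?thesis using 0 LRmax_lrm[OF p1] LRmax_lrm[OF p2] by simp
  next
    case (Suc j)
    then have "s \<noteq> []" using k by auto
    then have "s!0 \<in> set (take k s)" using Suc k by (simp add: in_set_conv_nth) (metis Suc length_take min_def nth_take zero_less_Suc not_less_eq_eq le_refl)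
    then have "\<exists>z\<in>set (take k s). x \<le> z" using pos by (meson in_set_takeD less_imp_le)
    then have "lrm 0 (ins k x s) = lrm 0 s" unfolding ins_def using lrm_ins_mid by simp
    then show ?thesis using Suc LRmax_lrm[OF p1] LRmax_lrm[OF p2] by simp
  qed
qed

lemma RL_ins:
  assumes pos: "\<forall>z\<in>set s. x < z" and k: "k \<le> length s"
  shows "RLmax (ins k x s) = RLmax s + (if k = length s then 1 else 0)"
proof -
  have "\<forall>z\<in>set (take k s @ drop k s). x < z" using pos by simp
  then have "rlm (take k s @ x # drop k s) = rlm s + (if drop k s = [] then 1 else 0)"
    using rlm_ins[of "take k s" "drop k s" x] by simp
  then show ?thesis unfolding RLmax_rlm ins_def using k by simp
qed

definition good :: "nat list \<Rightarrow> bool" where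
  "good t = (\<forall>i. Suc i < length t \<longrightarrow> t!i \<noteq> t!Suc i)"

lemma zigzag:
  "length t \<ge> 2 \<Longrightarrow> good t \<Longrightarrow>
   int (cnt peak t) + (if t!(length t - 2) < t!(length t - 1) then 1 else 0)
   = int (cnt valley t) + (if t!0 < t!1 then 1 else 0)"
proof (induction peak t rule: cnt.induct)
  case (1 a b c r)
  have g: "good (b#c#r)" using "1.prems"(2) unfolding good_def
    by (metis Suc_less_eq length_Cons nth_Cons_Suc)
  have ab: "a \<noteq> b" "b \<noteq> c" using "1.prems"(2) unfolding good_def by (metis length_Cons nth_Cons_0 nth_Cons_Suc zero_less_Suc Suc_less_eq)+
  have IH: "int (cnt peak (b#c#r)) + (if (b#c#r)!(length (b#c#r) - 2) < (b#c#r)!(length (b#c#r) - 1) then 1 else 0)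
     = int (cnt valley (b#c#r)) + (if b < c then 1 else 0)" using "1"(1) g by simp
  have l1: "(a#b#c#r)!(length (a#b#c#r) - 2) = (b#c#r)!(length (b#c#r) - 2)" by simp
  have l2: "(a#b#c#r)!(length (a#b#c#r) - 1) = (b#c#r)!(length (b#c#r) - 1)" by simp
  have "cnt valley (a#b#c#r) = (if valley a b c then 1 else 0) + cnt valley (b#c#r)" by simp
  moreover have "cnt peak (a#b#c#r) = (if peak a b c then 1 else 0) + cnt peak (b#c#r)" by simp
  ultimately show ?case using IH ab unfolding l1 l2 by (auto simp: peak_def valley_def)
next
  case ("2_1") then show ?case by simp
next
  case ("2_2" v) then show ?case by simp
next
  case ("2_3" v va) then show ?case by simp
qed

lemma cnt_pad_red:
  assumes "\<And>c. \<not> P 0 0 c" "\<And>a. \<not> P a 0 0"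
  shows "cnt P (padT s) = cnt P (0#s@[0])"
proof -
  have "cnt P (padT s) = cnt P (0#s@[0,0])"
    using cnt_Cons2[of "0#s@[0,0]" P 0] assms(1) by (simp add: padT_def)
  also obtain ys a where ys: "0#s = ys @ [a]" by (metis rev_exhaust list.distinct(1))
  then have "cnt P (0#s@[0,0]) = cnt P (ys @ [a,0] @ [0])" by (metis append_Cons append_assoc append_Cons append_Nil)
  also have "\<dots> = cnt P (ys @ [a,0]) + cnt P [a,0,0]" by (rule cnt_append)
  also have "\<dots> = cnt P (0#s@[0])" using assms(2) ys by (simp, metis append_Cons append_assoc append_Cons append_Nil)
  finally show ?thesis .
qed

lemma W_eq_V:
  assumes "distinct s" "\<forall>z\<in>set s. 0 < z" "s \<noteq> []"
  shows "Wst s = Vst s + 1"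
proof -
  let ?t = "0#s@[0]"
  have g: "good ?t" unfolding good_def
  proof (intro allI impI)
    fix i assume i: "Suc i < length ?t"
    show "?t!i \<noteq> ?t!Suc i"
    proof (cases i)
      case 0 then show ?thesis using assms(2,3) by (cases s) auto
    next
      case (Suc j)
      show ?thesis
      proof (cases "Suc j < length s")
        case True
        then show ?thesis using Suc assms(1) by (simp add: nth_append nth_eq_iff_index_eq)
      next
        case False
        then have sj: "Suc j = length s" using i Suc by simp
        have "?t!i = (s@[0])!j" using Suc by (simp only: nth_Cons_Suc)
        also have "\<dots> = s!j" using sj by (simp add: nth_append)
        finally have "?t!i = s!j" .
        moreover have "s!j > 0" using assms(2) sj by simp
        moreover have "?t!Suc i = 0" using Suc sj by (simp add: nth_append)
        ultimately show ?thesis by simp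
      qed
    qed
  qed
  have l: "length ?t \<ge> 2" by simp
  have f: "?t!0 < ?t!1" using assms(2,3) by (cases s) auto
  have la: "\<not> ?t!(length ?t - 2) < ?t!(length ?t - 1)" by (simp add: nth_append)
  have "int (cnt peak ?t) = int (cnt valley ?t) + 1" using zigzag[OF l g] f la by simp
  then have "cnt peak ?t = cnt valley ?t + 1" by simp
  moreover have "cnt peak (padT s) = cnt peak ?t" by (rule cnt_pad_red) (auto simp: peak_def)
  moreover have "cnt valley (padT s) = cnt valley ?t" by (rule cnt_pad_red) (auto simp: valley_def)
  ultimately show ?thesis using Wst_cnt Vst_cnt by simp
qed

definition mon :: "nat \<Rightarrow> nat \<Rightarrow> nat \<Rightarrow> nat \<Rightarrow> nat \<Rightarrow> poly" where
  "mon a b v r l = Var Alpha ^ a * Var Beta ^ b * Var U1 ^ v * Var U2 ^ v * Var U3 ^ r * Var U4 ^ l"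

definition wt :: "nat list \<Rightarrow> poly" where
  "wt s = mon (LRmax s - 1) (RLmax s - 1) (Vst s) (rdd s) (lda s)"

locale setting =
  fixes s :: "nat list" and x :: nat
  assumes dist: "distinct s" and xpos: "0 < x" and xmin: "\<forall>z\<in>set s. x < z" and ne: "s \<noteq> []"
begin

lemma sv_big: "1 \<le> j \<Longrightarrow> j \<le> length s \<Longrightarrow> x < sv s j"
  using xmin by (auto simp: sv_def)

lemma sv_zero: "j = 0 \<or> length s < j \<Longrightarrow> sv s j = 0"
  by (auto simp: sv_def)

lemma sv_adj: "j \<le> length s \<Longrightarrow> sv s j \<noteq> sv s (j+1)"
proof -
  assume j: "j \<le> length s"
  show ?thesis
  proof (cases "j = 0")
    case True then show ?thesis using sv_big[of 1] sv_zero[of 0] ne xpos by (cases s) auto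
  next
    case False
    show ?thesis
    proof (cases "j = length s")
      case True then show ?thesis using sv_big[of j] sv_zero[of "j+1"] False xpos by auto
    next
      case False2: False
      then have "j - 1 < length s" "j < length s" "j - 1 \<noteq> j" using j False by auto
      then show ?thesis using dist False False2 j by (auto simp: sv_def nth_eq_iff_index_eq)
    qed
  qed
qed

lemma cnts_ins:
  assumes "k \<le> length s"
  shows
   "Vst (ins k x s) + (if valley (sv s (k-1)) (sv s k) (sv s (k+1)) then 1 else 0)
      + (if valley (sv s k) (sv s (k+1)) (sv s (k+2)) then 1 else 0)
    = Vst s + (if valley (sv s (k-1)) (sv s k) x then 1 else 0) + (if valley (sv s k) x (sv s (k+1)) then 1 else 0)
      + (if valley x (sv s (k+1)) (sv s (k+2)) then 1 else 0)"
   "rdd (ins k x s) + (if ddes (sv s (k-1)) (sv s k) (sv s (k+1)) then 1 else 0)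
      + (if ddes (sv s k) (sv s (k+1)) (sv s (k+2)) then 1 else 0)
    = rdd s + (if ddes (sv s (k-1)) (sv s k) x then 1 else 0) + (if ddes (sv s k) x (sv s (k+1)) then 1 else 0)
      + (if ddes x (sv s (k+1)) (sv s (k+2)) then 1 else 0)"
   "lda (ins k x s) + (if dasc (sv s (k-1)) (sv s k) (sv s (k+1)) then 1 else 0)
      + (if dasc (sv s k) (sv s (k+1)) (sv s (k+2)) then 1 else 0)
    = lda s + (if dasc (sv s (k-1)) (sv s k) x then 1 else 0) + (if dasc (sv s k) x (sv s (k+1)) then 1 else 0)
      + (if dasc x (sv s (k+1)) (sv s (k+2)) then 1 else 0)"
  using cnt_ins_sv[OF assms] unfolding Vst_cnt rdd_cnt lda_cnt by blast+

lemma ins_front: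
  "Vst (ins 0 x s) = Vst s \<and> rdd (ins 0 x s) = rdd s \<and> lda (ins 0 x s) = lda s + 1"
proof -
  have q: "x < sv s 1" using sv_big[of 1] ne by (cases s) auto
  have z: "sv s 0 = 0" by (simp add: sv_zero)
  have a: "sv s 1 \<noteq> sv s 2" using sv_adj[of 1] ne by (cases s) (auto simp: numeral_2_eq_2)
  show ?thesis using cnts_ins[of 0] q z a xpos
    by (auto simp: valley_def ddes_def dasc_def)
qed

lemma ins_end:
  "Vst (ins (length s) x s) = Vst s \<and> rdd (ins (length s) x s) = rdd s + 1 \<and> lda (ins (length s) x s) = lda s"
proof -
  let ?m = "length s"
  have p: "x < sv s ?m" using sv_big[of ?m] ne by (cases s) auto
  have z: "sv s (?m+1) = 0" "sv s (?m+2) = 0" by (simp_all add: sv_zero)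
  have a: "sv s (?m - 1) \<noteq> sv s ?m" using sv_adj[of "?m - 1"] ne by (cases s) auto
  show ?thesis using cnts_ins[of ?m] p z a xpos
    by (auto simp: valley_def ddes_def dasc_def)
qed

lemma ins_mid:
  assumes k: "1 \<le> k" "k < length s"
  defines "l \<equiv> sv s (k-1)" and "p \<equiv> sv s k" and "q \<equiv> sv s (k+1)" and "r \<equiv> sv s (k+2)"
  shows "p < q \<Longrightarrow> l < p \<Longrightarrow> Vst (ins k x s) = Vst s + 1 \<and> rdd (ins k x s) = rdd s \<and> lda (ins k x s) + 1 = lda s"
    and "p < q \<Longrightarrow> p < l \<Longrightarrow> Vst (ins k x s) = Vst s \<and> rdd (ins k x s) = rdd s + 1 \<and> lda (ins k x s) = lda s"
    and "q < p \<Longrightarrow> r < q \<Longrightarrow> Vst (ins k x s) = Vst s + 1 \<and> rdd (ins k x s) + 1 = rdd s \<and> lda (ins k x s) = lda s"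
    and "q < p \<Longrightarrow> q < r \<Longrightarrow> Vst (ins k x s) = Vst s \<and> rdd (ins k x s) = rdd s \<and> lda (ins k x s) = lda s + 1"
proof -
  have xp: "x < p" "x < q" using sv_big[of k] sv_big[of "k+1"] k unfolding p_def q_def by auto
  have kk: "k \<le> length s" using k by simp
  have e: "sv s (k+1) = q" "sv s (k+2) = r" "sv s k = p" "sv s (k-1) = l" by (simp_all add: l_def p_def q_def r_def)
  note c = cnts_ins[OF kk, unfolded e]
  show "p < q \<Longrightarrow> l < p \<Longrightarrow> Vst (ins k x s) = Vst s + 1 \<and> rdd (ins k x s) = rdd s \<and> lda (ins k x s) + 1 = lda s"
    using c xp xpos by (auto simp: valley_def ddes_def dasc_def)
  show "p < q \<Longrightarrow> p < l \<Longrightarrow> Vst (ins k x s) = Vst s \<and> rdd (ins k x s) = rdd s + 1 \<and> lda (ins k x s) = lda s"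
    using c xp xpos by (auto simp: valley_def ddes_def dasc_def)
  show "q < p \<Longrightarrow> r < q \<Longrightarrow> Vst (ins k x s) = Vst s + 1 \<and> rdd (ins k x s) + 1 = rdd s \<and> lda (ins k x s) = lda s"
    using c xp xpos by (auto simp: valley_def ddes_def dasc_def)
  show "q < p \<Longrightarrow> q < r \<Longrightarrow> Vst (ins k x s) = Vst s \<and> rdd (ins k x s) = rdd s \<and> lda (ins k x s) = lda s + 1"
    using c xp xpos by (auto simp: valley_def ddes_def dasc_def)
qed

lemma ins_setting: "k \<le> length s \<Longrightarrow> distinct (ins k x s) \<and> (\<forall>z\<in>set (ins k x s). 0 < z) \<and> ins k x s \<noteq> []"
proof -
  assume k: "k \<le> length s"
  have "x \<notin> set s" using xmin by auto
  then have "distinct (ins k x s)" using dist unfolding ins_def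
    using set_take_disj_set_drop_if_distinct[OF dist, of k k]
    by (auto dest: in_set_takeD in_set_dropD)
  moreover have "\<forall>z\<in>set (ins k x s). 0 < z" using xmin xpos
    by (auto simp: ins_def dest!: in_set_takeD in_set_dropD)
  ultimately show ?thesis by (simp add: ins_def)
qed

lemma LR_pos: "LRmax s \<ge> 1"
proof -
  have "\<forall>z\<in>set s. 0 < z" using xmin xpos by auto
  moreover obtain y ys where "s = y#ys" using ne by (cases s) auto
  ultimately show ?thesis using LRmax_lrm by auto
qed

lemma rlm_pos: "t \<noteq> [] \<Longrightarrow> rlm t \<ge> 1"
proof (induction t)
  case Nil then show ?case by simp
next
  case (Cons y ys) then show ?case by (cases "ys = []") auto
qed

lemma RL_pos: "RLmax s \<ge> 1" using rlm_pos[OF ne] RLmax_rlm by simp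

lemma wt_mid:
  assumes k: "1 \<le> k" "k < length s"
  shows "wt (ins k x s) = (if sv s k < sv s (k+1) \<and> sv s (k-1) < sv s k then mon (LRmax s - 1) (RLmax s - 1) (Vst s + 1) (rdd s) (lda s - 1) else 0) + (if sv s k < sv s (k+1) \<and> sv s k < sv s (k-1) then mon (LRmax s - 1) (RLmax s - 1) (Vst s) (rdd s + 1) (lda s) else 0)
     + (if sv s (k+1) < sv s k \<and> sv s (k+2) < sv s (k+1) then mon (LRmax s - 1) (RLmax s - 1) (Vst s + 1) (rdd s - 1) (lda s) else 0) + (if sv s (k+1) < sv s k \<and> sv s (k+1) < sv s (k+2) then mon (LRmax s - 1) (RLmax s - 1) (Vst s) (rdd s) (lda s + 1) else 0)"
proof -
  have kk: "k \<le> length s" using k by simp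
  have LR: "LRmax (ins k x s) = LRmax s" using LR_ins[OF xmin xpos kk] k by simp
  have RL: "RLmax (ins k x s) = RLmax s" using RL_ins[OF xmin kk] k by simp
  have a1: "sv s (k-1) \<noteq> sv s k" using sv_adj[of "k-1"] k by simp
  have a2: "sv s k \<noteq> sv s (k+1)" using sv_adj[of k] k by simp
  have a3: "sv s (k+1) \<noteq> sv s (k+2)" using sv_adj[of "k+1"] k by simp
  note im = ins_mid[OF k]
  show ?thesis
  proof (cases "sv s k < sv s (k+1)")
    case True
    show ?thesis
    proof (cases "sv s (k-1) < sv s k")
      case True2: True
      have "lda (ins k x s) = lda s - 1" using im(1)[OF True True2] by linarith
      then show ?thesis using im(1)[OF True True2] True True2 LR RL unfolding wt_def by simp
    next
      case False2: False
      then have T2: "sv s k < sv s (k-1)" using a1 by simp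
      then show ?thesis using im(2)[OF True T2] True LR RL unfolding wt_def by simp
    qed
  next
    case False
    then have T: "sv s (k+1) < sv s k" using a2 by simp
    show ?thesis
    proof (cases "sv s (k+2) < sv s (k+1)")
      case True2: True
      have "rdd (ins k x s) = rdd s - 1" using im(3)[OF T True2] by linarith
      then show ?thesis using im(3)[OF T True2] T True2 LR RL unfolding wt_def by simp
    next
      case False2: False
      then have T2: "sv s (k+1) < sv s (k+2)" using a3 by simp
      then show ?thesis using im(4)[OF T T2] T LR RL unfolding wt_def by simp
    qed
  qed
qed

lemma card_TA: "card {k \<in> {1..length s - 1}. sv s k < sv s (k+1) \<and> sv s (k-1) < sv s k} = lda s"
  unfolding lda_def by (rule arg_cong[where f=card]) auto

lemma card_TB: "card {k \<in> {1..length s - 1}. sv s k < sv s (k+1) \<and> sv s k < sv s (k-1)} = Vst s"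
  unfolding Vst_def by (rule arg_cong[where f=card]) (auto simp: sv_zero, metis One_nat_def diff_Suc_1 le_neq_implies_less not_less_zero sv_zero)

lemma card_TC: "card {k \<in> {1..length s - 1}. sv s (k+1) < sv s k \<and> sv s (k+2) < sv s (k+1)} = rdd s"
proof -
  have "{i. 1 < i \<and> i \<le> length s \<and> sv s (i - 1) > sv s i \<and> sv s i > sv s (i + 1)} = Suc ` {k \<in> {1..length s - 1}. sv s (k+1) < sv s k \<and> sv s (k+2) < sv s (k+1)}"
  proof (rule set_eqI)
    fix i show "i \<in> {i. 1 < i \<and> i \<le> length s \<and> sv s (i - 1) > sv s i \<and> sv s i > sv s (i + 1)} \<longleftrightarrow> i \<in> Suc ` {k \<in> {1..length s - 1}. sv s (k+1) < sv s k \<and> sv s (k+2) < sv s (k+1)}"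
      by (cases i) (auto simp: image_iff)
  qed
  then show ?thesis unfolding rdd_def by (simp add: card_image)
qed

lemma card_TD: "card {k \<in> {1..length s - 1}. sv s (k+1) < sv s k \<and> sv s (k+1) < sv s (k+2)} = Vst s"
proof -
  have "{i. 1 < i \<and> i < length s \<and> sv s (i - 1) > sv s i \<and> sv s i < sv s (i + 1)} = Suc ` {k \<in> {1..length s - 1}. sv s (k+1) < sv s k \<and> sv s (k+1) < sv s (k+2)}"
  proof (rule set_eqI)
    fix i show "i \<in> {i. 1 < i \<and> i < length s \<and> sv s (i - 1) > sv s i \<and> sv s i < sv s (i + 1)} \<longleftrightarrow> i \<in> Suc ` {k \<in> {1..length s - 1}. sv s (k+1) < sv s k \<and> sv s (k+1) < sv s (k+2)}"
    proof (cases i)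
      case 0 then show ?thesis by auto
    next
      case (Suc j)
      have h: "j \<le> length s - 1 \<Longrightarrow> sv s (Suc j) < sv s (Suc (Suc j)) \<Longrightarrow> Suc j < length s"
        using sv_zero[of "Suc (Suc j)"] by (cases "Suc j < length s") auto
      show ?thesis using Suc h by (auto simp: image_iff)
    qed
  qed
  then show ?thesis unfolding Vst_def by (simp add: card_image)
qed

lemma sum_if_card: "finite I \<Longrightarrow> (\<Sum>k\<in>I. if P k then (c::poly) else 0) = of_nat (card {k\<in>I. P k}) * c"
  by (simp add: sum.inter_filter[symmetric])

lemma sum_ins: "(\<Sum>k=0..length s. wt (ins k x s)) =
   Var Alpha * Var U4 * mon (LRmax s - 1) (RLmax s - 1) (Vst s) (rdd s) (lda s) + Var Beta * Var U3 * mon (LRmax s - 1) (RLmax s - 1) (Vst s) (rdd s) (lda s)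
   + of_nat (lda s) * mon (LRmax s - 1) (RLmax s - 1) (Vst s + 1) (rdd s) (lda s - 1) + of_nat (Vst s) * mon (LRmax s - 1) (RLmax s - 1) (Vst s) (rdd s + 1) (lda s) + of_nat (rdd s) * mon (LRmax s - 1) (RLmax s - 1) (Vst s + 1) (rdd s - 1) (lda s) + of_nat (Vst s) * mon (LRmax s - 1) (RLmax s - 1) (Vst s) (rdd s) (lda s + 1)"
proof -
  obtain m' where m: "length s = Suc m'" using ne by (cases s) auto
  have LRp: "LRmax s \<ge> 1" by (rule LR_pos)
  have front: "wt (ins 0 x s) = Var Alpha * Var U4 * mon (LRmax s - 1) (RLmax s - 1) (Vst s) (rdd s) (lda s)"
  proof -
    have LR: "LRmax (ins 0 x s) - 1 = Suc (LRmax s - 1)" using LR_ins[OF xmin xpos, of 0] LRp by simp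
    have RL: "RLmax (ins 0 x s) = RLmax s" using RL_ins[OF xmin, of 0] m by simp
    show ?thesis using ins_front unfolding wt_def LR RL by (simp add: mon_def mult_ac)
  qed
  have bk: "wt (ins (length s) x s) = Var Beta * Var U3 * mon (LRmax s - 1) (RLmax s - 1) (Vst s) (rdd s) (lda s)"
  proof -
    have LR: "LRmax (ins (length s) x s) = LRmax s" using LR_ins[OF xmin xpos, of "length s"] m by simp
    have RL: "RLmax (ins (length s) x s) - 1 = Suc (RLmax s - 1)" using RL_ins[OF xmin, of "length s"] RL_pos by simp
    show ?thesis using ins_end unfolding wt_def LR RL by (simp add: mon_def mult_ac)
  qed
  have mid: "(\<Sum>k=1..length s - 1. wt (ins k x s)) = of_nat (lda s) * mon (LRmax s - 1) (RLmax s - 1) (Vst s + 1) (rdd s) (lda s - 1) + of_nat (Vst s) * mon (LRmax s - 1) (RLmax s - 1) (Vst s) (rdd s + 1) (lda s) + of_nat (rdd s) * mon (LRmax s - 1) (RLmax s - 1) (Vst s + 1) (rdd s - 1) (lda s) + of_nat (Vst s) * mon (LRmax s - 1) (RLmax s - 1) (Vst s) (rdd s) (lda s + 1)"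
  proof -
    have "(\<Sum>k=1..length s - 1. wt (ins k x s)) = (\<Sum>k=1..length s - 1. (if sv s k < sv s (k+1) \<and> sv s (k-1) < sv s k then mon (LRmax s - 1) (RLmax s - 1) (Vst s + 1) (rdd s) (lda s - 1) else 0) + (if sv s k < sv s (k+1) \<and> sv s k < sv s (k-1) then mon (LRmax s - 1) (RLmax s - 1) (Vst s) (rdd s + 1) (lda s) else 0)
     + (if sv s (k+1) < sv s k \<and> sv s (k+2) < sv s (k+1) then mon (LRmax s - 1) (RLmax s - 1) (Vst s + 1) (rdd s - 1) (lda s) else 0) + (if sv s (k+1) < sv s k \<and> sv s (k+1) < sv s (k+2) then mon (LRmax s - 1) (RLmax s - 1) (Vst s) (rdd s) (lda s + 1) else 0))"
      by (rule sum.cong) (auto simp: wt_mid)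
    also have "\<dots> = of_nat (card {k \<in> {1..length s - 1}. sv s k < sv s (k+1) \<and> sv s (k-1) < sv s k}) * mon (LRmax s - 1) (RLmax s - 1) (Vst s + 1) (rdd s) (lda s - 1) + of_nat (card {k \<in> {1..length s - 1}. sv s k < sv s (k+1) \<and> sv s k < sv s (k-1)}) * mon (LRmax s - 1) (RLmax s - 1) (Vst s) (rdd s + 1) (lda s)
       + of_nat (card {k \<in> {1..length s - 1}. sv s (k+1) < sv s k \<and> sv s (k+2) < sv s (k+1)}) * mon (LRmax s - 1) (RLmax s - 1) (Vst s + 1) (rdd s - 1) (lda s) + of_nat (card {k \<in> {1..length s - 1}. sv s (k+1) < sv s k \<and> sv s (k+1) < sv s (k+2)}) * mon (LRmax s - 1) (RLmax s - 1) (Vst s) (rdd s) (lda s + 1)"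
      by (simp only: sum.distrib sum_if_card finite_atLeastAtMost)
    finally show ?thesis unfolding card_TA card_TB card_TC card_TD .
  qed
  have "(\<Sum>k=0..length s. wt (ins k x s)) = wt (ins 0 x s) + (\<Sum>k=1..length s - 1. wt (ins k x s)) + wt (ins (length s) x s)"
    unfolding m by (simp add: sum.atLeast0_atMost_Suc sum.atLeast_Suc_atMost)
  then show ?thesis unfolding front bk mid by (simp add: algebra_simps)
qed

end

lemma ins_nth_k: "k \<le> length s \<Longrightarrow> ins k x s ! k = x"
  by (simp add: ins_def nth_append)

lemma ins_nth_lt: "j < k \<Longrightarrow> k \<le> length s \<Longrightarrow> ins k x s ! j = s ! j"
  by (simp add: ins_def nth_append)

lemma ins_inj:
  assumes "x \<notin> set s" "x \<notin> set s'" "k \<le> length s" "k' \<le> length s'" "ins k x s = ins k' x s'"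
  shows "s = s' \<and> k = k'"
proof -
  have kk: "k = k'"
  proof (rule ccontr)
    assume "k \<noteq> k'"
    then consider "k < k'" | "k' < k" by linarith
    then show False
    proof cases
      case 1
      then have "ins k' x s' ! k = s' ! k" using ins_nth_lt assms(4) by simp
      moreover have "ins k x s ! k = x" using ins_nth_k assms(3) by simp
      moreover have "s' ! k \<in> set s'" using 1 assms(4) by simp
      ultimately show False using assms(2,5) by metis
    next
      case 2
      then have "ins k x s ! k' = s ! k'" using ins_nth_lt assms(3) by simp
      moreover have "ins k' x s' ! k' = x" using ins_nth_k assms(4) by simp
      moreover have "s ! k' \<in> set s" using 2 assms(3) by simp
      ultimately show False using assms(1,5) by metis
    qed
  qed
  have "take k s = take k s'"
    using arg_cong[OF assms(5), of "take k"] assms(3,4) kk by (simp add: ins_def)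
  moreover have "drop k s = drop k s'"
    using arg_cong[OF assms(5), of "drop (Suc k)"] assms(3,4) kk by (simp add: ins_def)
  ultimately have "s = s'" by (metis append_take_drop_id)
  then show ?thesis using kk by simp
qed

lemma perms_ins:
  assumes fin: "finite S'" and x: "x \<notin> S'"
  shows "permutations_of_set (insert x S') = (\<lambda>(s,k). ins k x s) ` (permutations_of_set S' \<times> {0..card S'})"
    and "inj_on (\<lambda>(s,k). ins k x s) (permutations_of_set S' \<times> {0..card S'})"
proof -
  show "inj_on (\<lambda>(s,k). ins k x s) (permutations_of_set S' \<times> {0..card S'})"
  proof (rule inj_onI, clarify)
    fix s k s' k' assume "s \<in> permutations_of_set S'" "k \<in> {0..card S'}" "s' \<in> permutations_of_set S'" "k' \<in> {0..card S'}"
      "ins k x s = ins k' x s'"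
    then show "s = s' \<and> k = k'" using ins_inj[of x s s' k k'] x fin
      by (auto simp: permutations_of_set_def distinct_card[symmetric])
  qed
  show "permutations_of_set (insert x S') = (\<lambda>(s,k). ins k x s) ` (permutations_of_set S' \<times> {0..card S'})"
  proof (intro set_eqI iffI)
    fix t assume t: "t \<in> permutations_of_set (insert x S')"
    then have "x \<in> set t" by (simp add: permutations_of_set_def)
    then obtain xs ys where t': "t = xs @ x # ys" by (meson split_list)
    have d: "distinct t" "set t = insert x S'" using t by (auto simp: permutations_of_set_def)
    then have "x \<notin> set xs" "x \<notin> set ys" using t' by auto
    then have s: "xs @ ys \<in> permutations_of_set S'" using d t' x by (auto simp: permutations_of_set_def)
    then have "length (xs @ ys) = card S'" by (metis permutations_of_setD distinct_card)
    then have "length xs \<in> {0..card S'}" by simp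
    moreover have "ins (length xs) x (xs @ ys) = t" using t' by (simp add: ins_def)
    ultimately show "t \<in> (\<lambda>(s,k). ins k x s) ` (permutations_of_set S' \<times> {0..card S'})"
      using s by (metis (no_types, lifting) SigmaI case_prod_conv image_eqI)
  next
    fix t assume "t \<in> (\<lambda>(s,k). ins k x s) ` (permutations_of_set S' \<times> {0..card S'})"
    then obtain s k where t: "t = ins k x s" "s \<in> permutations_of_set S'" "k \<le> card S'" by auto
    then have "distinct s" "set s = S'" by (auto simp: permutations_of_set_def)
    moreover have "set (ins k x s) = insert x (set s)" unfolding ins_def
      by (metis append_take_drop_id insert_def set_append set_simps(2) Un_insert_right sup_commute Un_insert_left)
    moreover have "distinct (ins k x s)" using \<open>distinct s\<close> x \<open>set s = S'\<close>
      set_take_disj_set_drop_if_distinct[of s k k] unfolding ins_def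
      by (auto dest: in_set_takeD in_set_dropD)
    ultimately show "t \<in> permutations_of_set (insert x S')" using t by (auto simp: permutations_of_set_def)
  qed
qed

lemma sum_perms_ins:
  assumes fin: "finite S'" and x: "x \<notin> S'"
  shows "(\<Sum>t\<in>permutations_of_set (insert x S'). f t) = (\<Sum>s\<in>permutations_of_set S'. \<Sum>k=0..length s. f (ins k x s))"
proof -
  have "(\<Sum>s\<in>permutations_of_set S'. \<Sum>k=0..length s. f (ins k x s)) = (\<Sum>s\<in>permutations_of_set S'. \<Sum>k=0..card S'. f (ins k x s))"
    by (rule sum.cong) (auto simp: permutations_of_set_def distinct_card[symmetric])
  also have "\<dots> = (\<Sum>p\<in>permutations_of_set S' \<times> {0..card S'}. f ((\<lambda>(s,k). ins k x s) p))"
    by (simp add: sum.cartesian_product prod.case_distrib)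
  also have "\<dots> = (\<Sum>t\<in>permutations_of_set (insert x S'). f t)"
    unfolding perms_ins(1)[OF assms] by (rule sum.reindex[OF perms_ins(2)[OF assms], symmetric, unfolded comp_def])
  finally show ?thesis by simp
qed

locale der =
  fixes D :: "poly \<Rightarrow> poly"
  assumes add: "\<And>f g. D (f + g) = D f + D g"
    and lin_alpha: "\<And>f. D (Var Alpha * f) = Var Alpha * D f"
    and lin_beta: "\<And>f. D (Var Beta * f) = Var Beta * D f"
    and leibniz: "\<And>f g. D (f * g) = D f * g + f * D g"
    and Da: "D (Var A) = Var Alpha * Var A * Var U4"
    and Db: "D (Var B) = Var Beta * Var B * Var U3"
    and Du4: "D (Var U4) = Var U1 * Var U2"
    and Du3: "D (Var U3) = Var U1 * Var U2"
    and Du1: "D (Var U1) = Var U1 * Var U3"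
    and Du2: "D (Var U2) = Var U2 * Var U4"
begin

lemma D0: "D 0 = 0"
  using add[of 0 0] by simp

lemma D_sum: "D (\<Sum>i\<in>I. f i) = (\<Sum>i\<in>I. D (f i))"
  by (induction I rule: infinite_finite_induct) (auto simp: D0 add)

lemma D_pow: "D (f ^ n) = of_nat n * f ^ (n - 1) * D f"
proof (induction n)
  case 0
  have "D 1 = D 1 * 1 + 1 * D 1" using leibniz[of 1 1] by simp
  then show ?case by simp
next
  case (Suc n)
  show ?case
  proof (cases n)
    case 0 then show ?thesis using Suc by (simp add: leibniz)
  next
    case (Suc k)
    then show ?thesis using Suc.IH by (simp add: leibniz algebra_simps)
  qed
qed

lemma D_pow': "D f = f * g \<Longrightarrow> D (f ^ n) = of_nat n * f ^ n * g"
proof -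
  assume d: "D f = f * g"
  show ?thesis
  proof (cases n)
    case 0 then show ?thesis using D_pow[of f 0] by simp
  next
    case (Suc k)
    then show ?thesis using D_pow[of f n] d by (simp add: algebra_simps)
  qed
qed

lemma D_alpha_pow: "D (Var Alpha ^ a * f) = Var Alpha ^ a * D f"
  by (induction a) (auto simp: lin_alpha mult.assoc)

lemma D_beta_pow: "D (Var Beta ^ a * f) = Var Beta ^ a * D f"
  by (induction a) (auto simp: lin_beta mult.assoc)

lemma D_mon: "D (Var A * Var B * mon a b v r l) = Var A * Var B * (Var Alpha * Var U4 * mon a b v r l + Var Beta * Var U3 * mon a b v r l
   + of_nat l * mon a b (v+1) r (l-1) + of_nat v * mon a b v (r+1) l + of_nat r * mon a b (v+1) (r-1) l + of_nat v * mon a b v r (l+1))"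
proof -
  have e: "Var A * Var B * mon a b v r l = Var Alpha ^ a * (Var Beta ^ b * (Var A * Var B * Var U1 ^ v * Var U2 ^ v * Var U3 ^ r * Var U4 ^ l))"
    by (simp add: mon_def mult_ac)
  have "D (Var A * Var B * Var U1 ^ v * Var U2 ^ v * Var U3 ^ r * Var U4 ^ l)
     = Var A * Var B * (Var Alpha * Var U4 * (Var U1 ^ v * Var U2 ^ v * Var U3 ^ r * Var U4 ^ l) + Var Beta * Var U3 * (Var U1 ^ v * Var U2 ^ v * Var U3 ^ r * Var U4 ^ l)
       + of_nat v * Var U1 ^ v * Var U3 * Var U2 ^ v * Var U3 ^ r * Var U4 ^ l
       + of_nat v * Var U1 ^ v * Var U2 ^ v * Var U4 * Var U3 ^ r * Var U4 ^ l
       + of_nat r * Var U1 ^ v * Var U2 ^ v * Var U3 ^ (r - 1) * (Var U1 * Var U2) * Var U4 ^ l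
       + of_nat l * Var U1 ^ v * Var U2 ^ v * Var U3 ^ r * Var U4 ^ (l - 1) * (Var U1 * Var U2))"
    by (simp add: leibniz Da Db D_pow'[OF Du1] D_pow'[OF Du2] D_pow[of "Var U3"] D_pow[of "Var U4"] Du3 Du4 algebra_simps)
  then show ?thesis unfolding e D_alpha_pow D_beta_pow
    by (simp add: mon_def algebra_simps)
qed

end

lemma (in der) main:
  "finite S \<Longrightarrow> 0 \<notin> S \<Longrightarrow> card S = Suc n \<Longrightarrow>
   (D ^^ n) (Var A * Var B) = Var A * Var B * (\<Sum>s\<in>permutations_of_set S. wt s)"
proof (induction n arbitrary: S)
  case 0
  then obtain y where S: "S = {y}" by (auto simp: card_Suc_eq)
  then have y: "0 < y" using "0.prems"(2) by auto
  have "LRmax [y] = 1" using LRmax_lrm[of "[y]"] y by simp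
  moreover have "RLmax [y] = 1" using RLmax_rlm[of "[y]"] by simp
  moreover have "Vst [y] = 0" "rdd [y] = 0" "lda [y] = 0"
    unfolding Vst_cnt rdd_cnt lda_cnt by (simp_all add: padT_def valley_def ddes_def dasc_def)
  ultimately have "wt [y] = 1" by (simp add: wt_def mon_def)
  then show ?case using S by simp
next
  case (Suc n)
  define x where "x = Min S"
  define S' where "S' = S - {x}"
  have ne: "S \<noteq> {}" using Suc.prems(3) by auto
  have xS: "x \<in> S" unfolding x_def using Min_in[OF Suc.prems(1) ne] .
  have Sx: "S = insert x S'" using xS unfolding S'_def by auto
  have fin': "finite S'" using Suc.prems(1) unfolding S'_def by simp
  have x': "x \<notin> S'" unfolding S'_def by simp
  have c': "card S' = Suc n" using Suc.prems(3) xS unfolding S'_def by simp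
  have z': "0 \<notin> S'" using Suc.prems(2) unfolding S'_def by simp
  have xpos: "0 < x" using xS Suc.prems(2) by (cases x) auto
  have xmin: "\<forall>z\<in>S'. x < z" unfolding S'_def x_def using Suc.prems(1) by (auto intro: Min_le le_neq_implies_less)
  have IH: "(D ^^ n) (Var A * Var B) = Var A * Var B * (\<Sum>s\<in>permutations_of_set S'. wt s)"
    using Suc.IH[OF fin' z' c'] .
  have step: "D (Var A * Var B * wt s) = Var A * Var B * (\<Sum>k=0..length s. wt (ins k x s))"
    if s: "s \<in> permutations_of_set S'" for s
  proof -
    have sd: "distinct s" "set s = S'" using s by (auto simp: permutations_of_set_def)
    interpret setting s x
    proof
      show "distinct s" by (rule sd(1))
      show "0 < x" by (rule xpos)
      show "\<forall>z\<in>set s. x < z" using xmin sd(2) by simp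
      show "s \<noteq> []" using sd(2) c' by auto
    qed
    show ?thesis unfolding wt_def D_mon sum_ins[unfolded wt_def] ..
  qed
  have "(D ^^ Suc n) (Var A * Var B) = D (Var A * Var B * (\<Sum>s\<in>permutations_of_set S'. wt s))"
    using IH by simp
  also have "\<dots> = (\<Sum>s\<in>permutations_of_set S'. D (Var A * Var B * wt s))"
    by (simp add: sum_distrib_left D_sum)
  also have "\<dots> = (\<Sum>s\<in>permutations_of_set S'. Var A * Var B * (\<Sum>k=0..length s. wt (ins k x s)))"
    by (rule sum.cong) (auto simp: step)
  also have "\<dots> = Var A * Var B * (\<Sum>s\<in>permutations_of_set S'. \<Sum>k=0..length s. wt (ins k x s))"
    by (simp add: sum_distrib_left)
  also have "\<dots> = Var A * Var B * (\<Sum>t\<in>permutations_of_set S. wt t)"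
    unfolding Sx sum_perms_ins[OF fin' x'] ..
  finally show ?case .
qed

theorem theorem3p1:
  fixes D :: "poly \<Rightarrow> poly" and n :: nat
  assumes add: "\<And>f g. D (f + g) = D f + D g"
    and lin_Q: "\<And>c f. D (Const c * f) = Const c * D f"
    and lin_alpha: "\<And>f. D (Var Alpha * f) = Var Alpha * D f"
    and lin_beta: "\<And>f. D (Var Beta * f) = Var Beta * D f"
    and leibniz: "\<And>f g. D (f * g) = D f * g + f * D g"
    and Da: "D (Var A) = Var Alpha * Var A * Var U4"
    and Db: "D (Var B) = Var Beta * Var B * Var U3"
    and Du4: "D (Var U4) = Var U1 * Var U2"
    and Du3: "D (Var U3) = Var U1 * Var U2"
    and Du1: "D (Var U1) = Var U1 * Var U3"
    and Du2: "D (Var U2) = Var U2 * Var U4"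
  shows "(D ^^ n) (Var A * Var B) = Var A * Var B * Pn n"
proof -
  interpret der D
    by (unfold_locales; fact add lin_alpha lin_beta leibniz Da Db Du4 Du3 Du1 Du2)
  have "Pn n = (\<Sum>s\<in>permutations_of_set {1..n+1}. wt s)"
    unfolding Pn_def
  proof (rule sum.cong[OF refl])
    fix s assume s: "s \<in> permutations_of_set {1..n+1}"
    then have "distinct s" "\<forall>z\<in>set s. 0 < z" "s \<noteq> []" by (auto simp: permutations_of_set_def)
    then have "Wst s - 1 = Vst s" using W_eq_V by simp
    then show "Var U1 ^ Vst s * Var U2 ^ (Wst s - 1) * Var U3 ^ rdd s * Var U4 ^ lda s
      * Var Alpha ^ (LRmax s - 1) * Var Beta ^ (RLmax s - 1) = wt s"
      by (simp add: wt_def mon_def mult_ac)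
  qed
  then show ?thesis using main[of "{1..n+1}" n] by simp
qed

end
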